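(* Let $n=2m+1\ge3$, $I\subset\{0,\dots,m\}$ nonempty, $d\in\mathbb Z$, and let $(v_i)_{i\in n\mathbb Z\pm I}$ be a $d$-face of type $I$ with associated vectors $\mu_i=v_i-\omega_i$. Then for every $i\in I$, $d\le\mu_i(j)+\mu_i(j^* )\le d+1$ for all $j\in A_i$, and $d-1\le\mu_i(j)+\mu_i(j^* )\le d$ for all $j\in B_i$, where $j^*=n+1-j$, $A_i=\{1,2,\dots,i\}\cup\{i^*,i^*+1,\dots,n\}$ and $B_i=\{i+1,i+2,\dots,n-i\}$.
   Context: For $v\in\mathbb Z^n$ write $v(j)$ for its $j$-th entry, $\Sigma v$ for the sum of its entries, $v^*$ for the vector with $v^*(j)=v(n+1-j)$, $\mathbf d=(d,\dots,d)$, and $v\ge w$ if $v(j)\ge w(j)$ for all $j$. The index set $n\mathbb Z\pm I$ is the set of integers congruent mod $n$ to an element of $I\cup(-I)$. A $d$-face of type $I$ is a family $(v_i)_{i\in n\mathbb Z\pm I}$ of vectors in $\mathbb Z^n$ with: (F1) $v_{i+n}=v_i-\mathbf 1$; (F2) $v_i\ge v_j$ whenever $i\le j$; (F3) $\Sigma v_i-\Sigma v_j=j-i$; (F4) $v_i+v_{-i}^*=\mathbf d$, for all indices $i,j$ in $n\mathbb Z\pm I$. For $i=nb+c$ with $b\in\mathbb Z$, $0\le c<n$, $\omega_i=((-1)^{(c)},0^{(n-c)})-\mathbf b$, where $(x^{(p)},y^{(q)})$ denotes $x$ repeated $p$ times followed by $y$ repeated $q$ times. *)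

theory Defs
  imports Main
begin

text \<open>Vectors in Z^n are represented as functions nat => int, with entries
  indexed by 1..n (values outside 1..n are irrelevant). Families of vectors
  are functions int => (nat => int); only indices in the index set matter.\<close>

definition idx_set :: "nat \<Rightarrow> nat set \<Rightarrow> int set" where
  "idx_set n I = {k. \<exists>i\<in>I. k mod int n = int i mod int n \<or> k mod int n = (- int i) mod int n}"

definition vsum :: "nat \<Rightarrow> (nat \<Rightarrow> int) \<Rightarrow> int" where
  "vsum n v = (\<Sum>j=1..n. v j)"

definition is_face :: "nat \<Rightarrow> int \<Rightarrow> nat set \<Rightarrow> (int \<Rightarrow> nat \<Rightarrow> int) \<Rightarrow> bool" where
  "is_face n d I v \<longleftrightarrow>
     (\<forall>i\<in>idx_set n I. \<forall>k\<in>{1..n}. v (i + int n) k = v i k - 1) \<and>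
     (\<forall>i\<in>idx_set n I. \<forall>j\<in>idx_set n I. i \<le> j \<longrightarrow> (\<forall>k\<in>{1..n}. v i k \<ge> v j k)) \<and>
     (\<forall>i\<in>idx_set n I. \<forall>j\<in>idx_set n I. vsum n (v i) - vsum n (v j) = j - i) \<and>
     (\<forall>i\<in>idx_set n I. \<forall>k\<in>{1..n}. v i k + v (- i) (n + 1 - k) = d)"

text \<open>omega_i for i = n b + c, 0 <= c < n: first c entries -1, rest 0, minus b.\<close>
definition omega :: "nat \<Rightarrow> int \<Rightarrow> nat \<Rightarrow> int" where
  "omega n i k = (if int k \<le> i mod int n then -1 else 0) - i div int n"

definition mu :: "nat \<Rightarrow> (int \<Rightarrow> nat \<Rightarrow> int) \<Rightarrow> int \<Rightarrow> nat \<Rightarrow> int" where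
  "mu n v i k = v i k - omega n i k"

end

theory Submission
  imports Defs
begin

theorem lemma5p3p4:
  fixes m n :: nat and I :: "nat set" and d :: int and v :: "int \<Rightarrow> nat \<Rightarrow> int"
  assumes "n = 2 * m + 1" and "n \<ge> 3"
    and "I \<subseteq> {0..m}" and "I \<noteq> {}"
    and "is_face n d I v"
  shows "\<forall>i\<in>I.
     (\<forall>j\<in>{1..i} \<union> {n + 1 - i..n}.
        d \<le> mu n v (int i) j + mu n v (int i) (n + 1 - j) \<and>
        mu n v (int i) j + mu n v (int i) (n + 1 - j) \<le> d + 1) \<and>
     (\<forall>j\<in>{i + 1..n - i}.
        d - 1 \<le> mu n v (int i) j + mu n v (int i) (n + 1 - j) \<and>
        mu n v (int i) j + mu n v (int i) (n + 1 - j) \<le> d)"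
proof
  fix i assume iI: "i \<in> I"
  have im: "i \<le> m" using iI assms(3) by auto
  have F: "(\<forall>i\<in>idx_set n I. \<forall>k\<in>{1..n}. v (i + int n) k = v i k - 1) \<and>
     (\<forall>i\<in>idx_set n I. \<forall>j\<in>idx_set n I. i \<le> j \<longrightarrow> (\<forall>k\<in>{1..n}. v i k \<ge> v j k)) \<and>
     (\<forall>i\<in>idx_set n I. \<forall>k\<in>{1..n}. v i k + v (- i) (n + 1 - k) = d)"
    using assms(5) unfolding is_face_def by blast
  have m1: "int i \<in> idx_set n I" using iI unfolding idx_set_def by blast
  have m2: "- int i \<in> idx_set n I" using iI unfolding idx_set_def by blast
  have m3: "- int i + int n \<in> idx_set n I" using iI unfolding idx_set_def
    by (auto intro!: bexI[of _ i])
  have key: "v (int i) k + v (int i) (n + 1 - k) \<ge> d - 1 \<and> v (int i) k + v (int i) (n + 1 - k) \<le> d"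
    if k: "k \<in> {1..n}" for k
  proof -
    have a: "v (- int i) k + v (int i) (n + 1 - k) = d" using F m2 k by force
    have b: "v (- int i) k \<ge> v (int i) k" using F m1 m2 k by force
    have le: "int i \<le> - int i + int n" using im assms(1) by simp
    have c: "v (int i) k \<ge> v (- int i + int n) k" using F m1 m3 k le by blast
    have e: "v (- int i + int n) k = v (- int i) k - 1" using F m2 k by force
    show ?thesis using a b c e by linarith
  qed
  have om: "omega n (int i) k = (if k \<le> i then -1 else 0)" for k
    using im assms(1) by (simp add: omega_def)
  show "(\<forall>j\<in>{1..i} \<union> {n + 1 - i..n}.
        d \<le> mu n v (int i) j + mu n v (int i) (n + 1 - j) \<and>
        mu n v (int i) j + mu n v (int i) (n + 1 - j) \<le> d + 1) \<and>
     (\<forall>j\<in>{i + 1..n - i}.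
        d - 1 \<le> mu n v (int i) j + mu n v (int i) (n + 1 - j) \<and>
        mu n v (int i) j + mu n v (int i) (n + 1 - j) \<le> d)"
  proof (intro conjI ballI)
    fix j assume j: "j \<in> {1..i} \<union> {n + 1 - i..n}"
    have jn: "j \<in> {1..n}" using j im assms(1) by auto
    have s: "omega n (int i) j + omega n (int i) (n + 1 - j) = -1"
      using j im assms(1) unfolding om by auto
    show "d \<le> mu n v (int i) j + mu n v (int i) (n + 1 - j)"
      "mu n v (int i) j + mu n v (int i) (n + 1 - j) \<le> d + 1"
      using key[OF jn] s unfolding mu_def by linarith+
  next
    fix j assume j: "j \<in> {i + 1..n - i}"
    have jn: "j \<in> {1..n}" using j im assms(1) by auto
    have s: "omega n (int i) j + omega n (int i) (n + 1 - j) = 0"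
      using j im assms(1) unfolding om by auto
    show "d - 1 \<le> mu n v (int i) j + mu n v (int i) (n + 1 - j)"
      "mu n v (int i) j + mu n v (int i) (n + 1 - j) \<le> d"
      using key[OF jn] s unfolding mu_def by linarith+
  qed
qed

end
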